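(* Let $\Theta\subseteq\mathbb{R}^p$ be convex, let $f:\mathbb{R}^p\to\mathbb{R}$, let $\kappa\in\Theta$, and let $g\in\mathcal{S}_L(f,\kappa)$. Define $h\triangleq g-f$ and let $\theta'\in\operatorname{arg\,min}_{\theta\in\Theta} g(\theta)$. Then for all $\theta\in\Theta$: (i) $|h(\theta)|\le \frac{L}{2}\|\theta-\kappa\|_2^2$; (ii) $f(\theta')\le f(\theta)+\frac{L}{2}\|\theta-\kappa\|_2^2$. If moreover $g\in\mathcal{S}_{L,\rho}(f,\kappa)$, then for all $\theta\in\Theta$: (iii) $f(\theta')+\frac{\rho}{2}\|\theta'-\theta\|_2^2\le f(\theta)+\frac{L}{2}\|\theta-\kappa\|_2^2$.
   Context: First-order surrogates: given a convex set $\Theta\subseteq\mathbb{R}^p$, a function $f:\mathbb{R}^p\to\mathbb{R}$, a point $\kappa$ and $L>0$, a function $g:\mathbb{R}^p\to\mathbb{R}$ belongs to $\mathcal{S}_L(f,\kappa)$ (is a first-order surrogate of $f$ near $\kappa$ in $\Theta$) if (a) (majorization) $g(\theta')\ge f(\theta')$ for all $\theta'\in\operatorname{arg\,min}_{\theta\in\Theta}g(\theta)$, and (b) (smoothness) the approximation error $h\triangleq g-f$ is differentiable on $\mathbb{R}^p$ with $L$-Lipschitz continuous gradient, and $h(\kappa)=0$, $\nabla h(\kappa)=0$. $\mathcal{S}_{L,\rho}(f,\kappa)$ denotes the subset of $\mathcal{S}_L(f,\kappa)$ consisting of $\rho$-strongly convex functions ($\rho>0$). *)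

theory Defs
  imports "HOL-Analysis.Analysis"
begin

definition argmin_on :: "'a set \<Rightarrow> ('a \<Rightarrow> real) \<Rightarrow> 'a set" where
  "argmin_on Theta g = {t \<in> Theta. \<forall>x \<in> Theta. g t \<le> g x}"

definition has_lipschitz_gradient :: "('a::euclidean_space \<Rightarrow> real) \<Rightarrow> ('a \<Rightarrow> 'a) \<Rightarrow> real \<Rightarrow> bool" where
  "has_lipschitz_gradient h D L \<longleftrightarrow>
     (\<forall>x. (h has_derivative (\<lambda>v. D x \<bullet> v)) (at x)) \<and>
     (\<forall>x y. norm (D x - D y) \<le> L * norm (x - y))"

definition first_order_surrogate ::
  "'a::euclidean_space set \<Rightarrow> real \<Rightarrow> ('a \<Rightarrow> real) \<Rightarrow> 'a \<Rightarrow> ('a \<Rightarrow> real) \<Rightarrow> bool" where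
  "first_order_surrogate Theta L f kappa g \<longleftrightarrow>
     (\<forall>t \<in> argmin_on Theta g. g t \<ge> f t) \<and>
     (\<exists>D. has_lipschitz_gradient (\<lambda>x. g x - f x) D L \<and>
          g kappa - f kappa = 0 \<and> D kappa = 0)"

definition strongly_convex :: "real \<Rightarrow> ('a::real_normed_vector \<Rightarrow> real) \<Rightarrow> bool" where
  "strongly_convex rho g \<longleftrightarrow>
     (\<forall>x y u. 0 \<le> u \<and> u \<le> 1 \<longrightarrow>
        g (u *\<^sub>R x + (1 - u) *\<^sub>R y) \<le> u * g x + (1 - u) * g y - rho / 2 * u * (1 - u) * (norm (x - y))\<^sup>2)"

definition strongly_convex_surrogate ::
  "'a::euclidean_space set \<Rightarrow> real \<Rightarrow> real \<Rightarrow> ('a \<Rightarrow> real) \<Rightarrow> 'a \<Rightarrow> ('a \<Rightarrow> real) \<Rightarrow> bool" where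
  "strongly_convex_surrogate Theta L rho f kappa g \<longleftrightarrow>
     first_order_surrogate Theta L f kappa g \<and> strongly_convex rho g"

end

theory Submission
  imports Defs
begin

lemma line_deriv:
  fixes h :: "'a::euclidean_space \<Rightarrow> real"
  assumes "\<forall>x. (h has_derivative (\<lambda>v. D x \<bullet> v)) (at x)"
  shows "((\<lambda>s. h (k + s *\<^sub>R d)) has_real_derivative (D (k + s *\<^sub>R d) \<bullet> d)) (at s)"
proof -
  have l: "((\<lambda>s. k + s *\<^sub>R d) has_derivative (\<lambda>s'. s' *\<^sub>R d)) (at s)"
    by (auto intro!: derivative_eq_intros)
  have "((\<lambda>s. h (k + s *\<^sub>R d)) has_derivative (\<lambda>s'. D (k + s *\<^sub>R d) \<bullet> (s' *\<^sub>R d))) (at s)"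
    using has_derivative_compose[OF l assms[rule_format, of "k + s *\<^sub>R d"]] by (simp add: o_def)
  moreover have "(\<lambda>s'. D (k + s *\<^sub>R d) \<bullet> (s' *\<^sub>R d)) = (*) (D (k + s *\<^sub>R d) \<bullet> d)"
    by (auto simp: fun_eq_iff)
  ultimately show ?thesis by (simp add: has_field_derivative_def)
qed

lemma quad_bound:
  fixes h :: "'a::euclidean_space \<Rightarrow> real"
  assumes "has_lipschitz_gradient h D L" "h k = 0" "D k = 0"
  shows "\<bar>h t\<bar> \<le> L / 2 * (norm (t - k))\<^sup>2"
proof -
  define d where "d = t - k"
  have der: "\<And>s. ((\<lambda>s. h (k + s *\<^sub>R d)) has_real_derivative (D (k + s *\<^sub>R d) \<bullet> d)) (at s)"
    using assms(1) unfolding has_lipschitz_gradient_def by (intro line_deriv) auto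
  have bnd: "\<bar>D (k + s *\<^sub>R d) \<bullet> d\<bar> \<le> L * s * (norm d)\<^sup>2" if "0 \<le> s" for s
  proof -
    have "\<bar>D (k + s *\<^sub>R d) \<bullet> d\<bar> \<le> norm (D (k + s *\<^sub>R d)) * norm d"
      by (rule Cauchy_Schwarz_ineq2)
    also have "norm (D (k + s *\<^sub>R d)) = norm (D (k + s *\<^sub>R d) - D k)" using assms(3) by simp
    also have "\<dots> \<le> L * norm (k + s *\<^sub>R d - k)"
      using assms(1) unfolding has_lipschitz_gradient_def by blast
    also have "norm (k + s *\<^sub>R d - k) = s * norm d" using that by simp
    finally show ?thesis by (simp add: power2_eq_square mult_right_mono algebra_simps)
  qed
  let ?q = "\<lambda>s. L / 2 * s\<^sup>2 * (norm d)\<^sup>2"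
  have dq: "(?q has_real_derivative (L * s * (norm d)\<^sup>2)) (at s)" for s
    by (auto intro!: derivative_eq_intros simp: power2_eq_square)
  have "(\<lambda>s. h (k + s *\<^sub>R d) - ?q s) 1 \<le> (\<lambda>s. h (k + s *\<^sub>R d) - ?q s) 0"
  proof (rule DERIV_nonpos_imp_nonincreasing[of 0 1])
    fix x :: real assume "0 \<le> x" "x \<le> 1"
    show "\<exists>y. DERIV (\<lambda>s. h (k + s *\<^sub>R d) - ?q s) x :> y \<and> y \<le> 0"
      using DERIV_diff[OF der dq] bnd[OF \<open>0 \<le> x\<close>] by (intro exI conjI) (auto simp: abs_le_iff)
  qed simp
  moreover have "(\<lambda>s. h (k + s *\<^sub>R d) + ?q s) 0 \<le> (\<lambda>s. h (k + s *\<^sub>R d) + ?q s) 1"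
  proof (rule DERIV_nonneg_imp_nondecreasing[of 0 1])
    fix x :: real assume "0 \<le> x" "x \<le> 1"
    show "\<exists>y. DERIV (\<lambda>s. h (k + s *\<^sub>R d) + ?q s) x :> y \<and> y \<ge> 0"
      using DERIV_add[OF der dq] bnd[OF \<open>0 \<le> x\<close>] by (intro exI conjI) (auto simp: abs_le_iff)
  qed simp
  ultimately show ?thesis using assms(2) by (simp add: d_def abs_le_iff)
qed

lemma sc_bound:
  fixes g :: "'a::real_normed_vector \<Rightarrow> real"
  assumes sc: "strongly_convex rho g" and rho: "rho > 0" and cv: "convex Theta"
    and t: "t \<in> Theta" and m: "t' \<in> argmin_on Theta g"
  shows "g t' + rho / 2 * (norm (t' - t))\<^sup>2 \<le> g t"
proof (rule ccontr)
  assume neg: "\<not> ?thesis"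
  define n where "n = (norm (t - t'))\<^sup>2"
  define \<delta> where "\<delta> = g t' + rho / 2 * n - g t"
  have dpos: "\<delta> > 0" using neg by (simp add: \<delta>_def n_def norm_minus_commute)
  have t'T: "t' \<in> Theta" and mn: "\<And>x. x \<in> Theta \<Longrightarrow> g t' \<le> g x" using m by (auto simp: argmin_on_def)
  have npos: "n > 0"
  proof (rule ccontr)
    assume "\<not> n > 0" then have "n = 0" by (simp add: n_def)
    then show False using dpos mn[OF t] by (simp add: \<delta>_def)
  qed
  define u where "u = min 1 (\<delta> / (rho * n))"
  have u0: "0 < u" and u1: "u \<le> 1" using dpos npos rho by (auto simp: u_def)
  have un: "u * (rho * n) \<le> \<delta>"
  proof -
    have "u \<le> \<delta> / (rho * n)" by (simp add: u_def)
    then have "u * (rho * n) \<le> \<delta> / (rho * n) * (rho * n)"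
      using npos rho by (intro mult_right_mono) auto
    also have "\<dots> = \<delta>" using npos rho by simp
    finally show ?thesis .
  qed
  have "u *\<^sub>R t + (1 - u) *\<^sub>R t' \<in> Theta" using cv t t'T u0 u1 by (auto intro: convexD)
  then have "g t' \<le> g (u *\<^sub>R t + (1 - u) *\<^sub>R t')" by (rule mn)
  also have "\<dots> \<le> u * g t + (1 - u) * g t' - rho / 2 * u * (1 - u) * n"
    using sc u0 u1 unfolding strongly_convex_def n_def by auto
  finally have "u * g t' \<le> u * (g t - rho / 2 * (1 - u) * n)" by (simp add: algebra_simps)
  then have "g t' \<le> g t - rho / 2 * (1 - u) * n" using u0
    by (rule mult_left_le_imp_le)
  moreover have "rho / 2 * (1 - u) * n = rho / 2 * n - rho / 2 * u * n" by (simp add: field_simps)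
  ultimately have "\<delta> \<le> rho / 2 * u * n" unfolding \<delta>_def by linarith
  moreover have "rho / 2 * u * n < \<delta>" using un dpos by (simp add: algebra_simps)
  ultimately show False by simp
qed

theorem lemma2p1:
  fixes Theta :: "'a::euclidean_space set" and f g :: "'a \<Rightarrow> real"
    and kappa t' :: 'a and L :: real
  assumes "convex Theta" and "kappa \<in> Theta" and "L > 0"
    and "first_order_surrogate Theta L f kappa g"
    and "t' \<in> argmin_on Theta g"
  shows "(\<forall>t \<in> Theta. \<bar>g t - f t\<bar> \<le> L / 2 * (norm (t - kappa))\<^sup>2)
    \<and> (\<forall>t \<in> Theta. f t' \<le> f t + L / 2 * (norm (t - kappa))\<^sup>2)
    \<and> (\<forall>rho > 0. strongly_convex_surrogate Theta L rho f kappa g \<longrightarrow>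
           (\<forall>t \<in> Theta. f t' + rho / 2 * (norm (t' - t))\<^sup>2 \<le> f t + L / 2 * (norm (t - kappa))\<^sup>2))"
proof -
  obtain D where D: "has_lipschitz_gradient (\<lambda>x. g x - f x) D L"
    "g kappa - f kappa = 0" "D kappa = 0" and maj: "\<forall>t \<in> argmin_on Theta g. g t \<ge> f t"
    using assms(4) unfolding first_order_surrogate_def by blast
  have i: "\<bar>g t - f t\<bar> \<le> L / 2 * (norm (t - kappa))\<^sup>2" for t
    using quad_bound[OF D] by simp
  have gf: "f t' \<le> g t'" using maj assms(5) by blast
  have mn: "\<And>x. x \<in> Theta \<Longrightarrow> g t' \<le> g x" using assms(5) by (auto simp: argmin_on_def)
  have ii: "f t' \<le> f t + L / 2 * (norm (t - kappa))\<^sup>2" if "t \<in> Theta" for t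
    using gf mn[OF that] i[of t] unfolding abs_le_iff by linarith
  have iii: "f t' + rho / 2 * (norm (t' - t))\<^sup>2 \<le> f t + L / 2 * (norm (t - kappa))\<^sup>2"
    if "rho > 0" "strongly_convex_surrogate Theta L rho f kappa g" "t \<in> Theta" for rho t
  proof -
    have "g t' + rho / 2 * (norm (t' - t))\<^sup>2 \<le> g t"
      using sc_bound[OF _ that(1) assms(1) that(3) assms(5)] that(2)
      unfolding strongly_convex_surrogate_def by blast
    then show ?thesis using gf i[of t] unfolding abs_le_iff by linarith
  qed
  show ?thesis using i ii iii by blast
qed

end
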